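(* Let $\Phi$ be a real, additive gain graph of order $n$, let $d<n-1$, and let $Q_1,\dots,Q_n\in\mathbb{E}^d$ affinely span $\mathbb{E}^d$ (with $Q_i\neq Q_j$ whenever $i,j$ are adjacent). Then there exist affinely independent points $Q'_1,\dots,Q'_n\in\mathbb{E}^{n-1}$ and a $d$-flat $t$ of $\mathbb{E}^{n-1}$, with $\mathbb{E}^d$ identified isometrically with $t$, such that $\mathcal{H}(\Phi;\mathbf{Q})=\mathcal{H}(\Phi;\mathbf{Q}')^t$.
   Context: A real, additive gain graph $\Phi$ on $\{1,\dots,n\}$: finite graph (multiple edges allowed, every edge with two distinct endpoints) with gains $\phi(e;i,j)\in\mathbb{R}$, $\phi(e;j,i)=-\phi(e;i,j)$. With $\psi_{ij}(P)=d(P,Q_i)^2-d(P,Q_j)^2$, $\mathcal{H}(\Phi;\mathbf{Q})$ consists of the hyperplanes $h(e)=\{P:\psi_{ij}(P)=\phi(e;i,j)\}$ (in the Euclidean space containing the reference points), one per edge $e$ with endpoints $i,j$. For an arrangement $\mathcal{H}$ and affine flat $t$, $\mathcal{H}^t=\{h\cap t:h\in\mathcal{H},\ h\not\supseteq t,\ h\cap t\neq\emptyset\}$. *)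

theory Defs
  imports "HOL-Analysis.Analysis"
begin

text \<open>A real additive gain graph on vertices {1..n}: a finite set E of edges
(of an arbitrary edge type, so multiple edges are allowed); each edge e has an
ordered pair of distinct endpoints ends e = (i,j), and gain phi e = phi(e;i,j).
The gain for the reverse orientation is implicitly -phi e (additive gains).\<close>
definition gain_graph :: "nat \<Rightarrow> 'e set \<Rightarrow> ('e \<Rightarrow> nat \<times> nat) \<Rightarrow> bool" where
  "gain_graph n E ends \<longleftrightarrow> finite E \<and>
     (\<forall>e\<in>E. fst (ends e) \<in> {1..n} \<and> snd (ends e) \<in> {1..n} \<and> fst (ends e) \<noteq> snd (ends e))"

definition adjacent :: "'e set \<Rightarrow> ('e \<Rightarrow> nat \<times> nat) \<Rightarrow> nat \<Rightarrow> nat \<Rightarrow> bool" where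
  "adjacent E ends i j \<longleftrightarrow> (\<exists>e\<in>E. ends e = (i, j) \<or> ends e = (j, i))"

definition psi :: "(nat \<Rightarrow> 'a::real_normed_vector) \<Rightarrow> nat \<Rightarrow> nat \<Rightarrow> 'a \<Rightarrow> real" where
  "psi Q i j P = (dist P (Q i))\<^sup>2 - (dist P (Q j))\<^sup>2"

definition gain_hyperplane ::
    "('e \<Rightarrow> nat \<times> nat) \<Rightarrow> ('e \<Rightarrow> real) \<Rightarrow> (nat \<Rightarrow> 'a::real_normed_vector) \<Rightarrow> 'e \<Rightarrow> 'a set" where
  "gain_hyperplane ends phi Q e = {P. psi Q (fst (ends e)) (snd (ends e)) P = phi e}"

definition gain_arrangement ::
    "'e set \<Rightarrow> ('e \<Rightarrow> nat \<times> nat) \<Rightarrow> ('e \<Rightarrow> real) \<Rightarrow> (nat \<Rightarrow> 'a::real_normed_vector) \<Rightarrow> 'a set set" where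
  "gain_arrangement E ends phi Q = gain_hyperplane ends phi Q ` E"

definition restrict_arr :: "'a set set \<Rightarrow> 'a set \<Rightarrow> 'a set set" where
  "restrict_arr H t = {h \<inter> t | h. h \<in> H \<and> \<not> t \<subseteq> h \<and> h \<inter> t \<noteq> {}}"

end

theory Submission
  imports Defs
begin

lemma dist_sq_diff:
  fixes x a b :: "'a::euclidean_space"
  shows "(dist x a)\<^sup>2 - (dist x b)\<^sup>2 = 2 * (x \<bullet> (b - a)) + a \<bullet> a - b \<bullet> b"
  by (simp add: dist_norm power2_norm_eq_inner inner_diff_left inner_diff_right inner_commute algebra_simps)

lemma psi_hit:
  fixes a b :: "'a::euclidean_space"
  assumes "a \<noteq> b"
  shows "\<exists>x. (dist x a)\<^sup>2 - (dist x b)\<^sup>2 = c"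
proof -
  let ?K = "a \<bullet> a - b \<bullet> b"
  have nz: "(b - a) \<bullet> (b - a) \<noteq> 0" using assms by simp
  define s where "s = (c - ?K) / (2 * ((b - a) \<bullet> (b - a)))"
  have "(dist (s *\<^sub>R (b - a)) a)\<^sup>2 - (dist (s *\<^sub>R (b - a)) b)\<^sup>2 = 2 * s * ((b - a) \<bullet> (b - a)) + ?K"
    by (simp add: dist_sq_diff)
  also have "\<dots> = c" using nz by (simp add: s_def field_simps)
  finally show ?thesis by blast
qed

lemma psi_miss:
  fixes a b :: "'a::euclidean_space"
  assumes "a \<noteq> b"
  shows "\<exists>x. (dist x a)\<^sup>2 - (dist x b)\<^sup>2 \<noteq> c"
proof (rule ccontr)
  assume "\<not> ?thesis"
  then have h: "\<And>x. (dist x a)\<^sup>2 - (dist x b)\<^sup>2 = c" by blast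
  have e1: "2 * (0 \<bullet> (b - a)) + a \<bullet> a - b \<bullet> b = c" using h[of 0] by (simp only: dist_sq_diff)
  have e2: "2 * ((b - a) \<bullet> (b - a)) + a \<bullet> a - b \<bullet> b = c" using h[of "b - a"] by (simp only: dist_sq_diff)
  have e1': "a \<bullet> a - b \<bullet> b = c" using e1 by simp
  have "(b - a) \<bullet> (b - a) = 0" using e1' e2 by linarith
  then show False using assms by simp
qed

theorem theorem7p5:
  fixes n :: nat and E :: "'e set" and ends :: "'e \<Rightarrow> nat \<times> nat" and phi :: "'e \<Rightarrow> real"
    and Q :: "nat \<Rightarrow> 'a::euclidean_space"
  assumes "gain_graph n E ends"
    and "DIM('a) < n - 1"
    and "DIM('b::euclidean_space) = n - 1"
    and "affine hull (Q ` {1..n}) = UNIV"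
    and "\<And>i j. i \<in> {1..n} \<Longrightarrow> j \<in> {1..n} \<Longrightarrow> adjacent E ends i j \<Longrightarrow> Q i \<noteq> Q j"
  shows "\<exists>(Q' :: nat \<Rightarrow> 'b) (t :: 'b set) (f :: 'a \<Rightarrow> 'b).
           inj_on Q' {1..n} \<and> \<not> affine_dependent (Q' ` {1..n}) \<and>
           affine t \<and> aff_dim t = int DIM('a) \<and>
           (\<forall>x y. dist (f x) (f y) = dist x y) \<and> f ` UNIV = t \<and>
           (\<lambda>h. f ` h) ` gain_arrangement E ends phi Q
             = restrict_arr (gain_arrangement E ends phi Q') t"
proof -
  define d where "d = DIM('a)"
  define I where "I = {1..n}"
  have finI: "finite I" and cardI: "card I = n" by (auto simp: I_def)
  have gg: "\<And>e. e \<in> E \<Longrightarrow> fst (ends e) \<in> I \<and> snd (ends e) \<in> I"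
    using assms(1) unfolding gain_graph_def I_def by blast
  have Qne: "\<And>e. e \<in> E \<Longrightarrow> Q (fst (ends e)) \<noteq> Q (snd (ends e))"
  proof -
    fix e assume e: "e \<in> E"
    have "adjacent E ends (fst (ends e)) (snd (ends e))"
      unfolding adjacent_def using e by (intro bexI[of _ e]) auto
    then show "Q (fst (ends e)) \<noteq> Q (snd (ends e))" using assms(5) gg[OF e] I_def by blast
  qed
  obtain Bp where Bp: "Bp \<subseteq> Q ` I" "\<not> affine_dependent Bp" "affine hull (Q ` I) = affine hull Bp"
    using affine_basis_exists by blast
  have hullBp: "affine hull Bp = UNIV" using Bp(3) assms(4) I_def by simp
  have "aff_dim Bp = int d"
    by (metis aff_dim_affine_hull aff_dim_UNIV hullBp d_def)
  then have cardBp: "card Bp = d + 1" using aff_dim_affine_independent[OF Bp(2)] by simp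
  obtain B where B: "B \<subseteq> I" "inj_on Q B" "Bp = Q ` B" using Bp(1) subset_image_inj by metis
  have finB: "finite B" using B(1) finI finite_subset by blast
  have cardB: "card B = d + 1" using cardBp B card_image by metis
  define R where "R = I - B"
  have finR: "finite R" using finI R_def by simp
  have dn: "d + 1 < n" using assms(2) d_def by simp
  have cardR: "card R = n - 1 - d" unfolding R_def using card_Diff_subset[OF finB B(1)] cardI cardB by simp
  have "d \<le> card (Basis :: 'b set)" using assms(3) dn by simp
  then obtain S0 where S0: "S0 \<subseteq> (Basis :: 'b set)" "card S0 = d" "finite S0"
    by (rule obtain_subset_with_card_n)
  define C where "C = (Basis :: 'b set) - S0"
  have cardC: "card C = n - 1 - d" unfolding C_def using card_Diff_subset[OF S0(3) S0(1)] S0(2) assms(3) by simp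
  obtain \<sigma> where \<sigma>: "bij_betw \<sigma> R C" using finite_same_card_bij[of R C] finR cardR cardC C_def by auto
  have "R \<noteq> {}" using cardR dn by auto
  then obtain i0 where i0: "i0 \<in> R" by blast
  define u1 where "u1 = \<sigma> i0"
  have \<sigma>C: "\<And>i. i \<in> R \<Longrightarrow> \<sigma> i \<in> C" using \<sigma> bij_betwE by blast
  have \<sigma>inj: "\<And>i j. i \<in> R \<Longrightarrow> j \<in> R \<Longrightarrow> \<sigma> i = \<sigma> j \<longleftrightarrow> i = j"
    using \<sigma> unfolding bij_betw_def inj_on_def by blast
  have u1C: "u1 \<in> C" using \<sigma>C i0 u1_def by simp
  have CB: "C \<subseteq> Basis" using C_def by auto
  have indS0: "independent S0" using S0(1) independent_Basis independent_mono by blast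
  have dimS0: "dim (UNIV :: 'a set) = dim (span S0)"
    using dim_eq_card_independent[OF indS0] S0(2) d_def by simp
  obtain f :: "'a \<Rightarrow> 'b" where f0: "linear f" "f ` UNIV = span S0" "\<And>x. x \<in> UNIV \<Longrightarrow> norm (f x) = norm x"
    using isometry_subspaces[OF subspace_UNIV subspace_span dimS0] by metis
  have f: "linear f" "f ` UNIV = span S0" "\<And>x. norm (f x) = norm x" using f0 by auto
  define w where "w i = (if i \<in> R then \<sigma> i else - u1)" for i
  define Q' where "Q' i = f (Q i) + w i" for i
  define t where "t = span S0"
  have orth: "\<And>y k. y \<in> span S0 \<Longrightarrow> k \<in> C \<Longrightarrow> y \<bullet> k = 0"
  proof -
    fix y k assume y: "y \<in> span S0" and k: "k \<in> C"
    have "orthogonal k y"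
      by (rule orthogonal_to_span[OF y]) (use k C_def S0(1) in \<open>auto simp: orthogonal_def inner_Basis\<close>)
    then show "y \<bullet> k = 0" by (simp add: orthogonal_def inner_commute)
  qed
  have fspan: "\<And>x. f x \<in> span S0" using f(2) by blast
  have fw: "\<And>x i. f x \<bullet> w i = 0"
    using orth[OF fspan] \<sigma>C u1C unfolding w_def by auto
  have nw: "\<And>i. norm (w i) = 1"
    using \<sigma>C u1C CB unfolding w_def by (auto intro!: norm_Basis)
  have K1: "\<And>x i. (dist (f x) (Q' i))\<^sup>2 = (dist x (Q i))\<^sup>2 + 1"
  proof -
    fix x i
    have "f x - Q' i = f (x - Q i) - w i" using f(1) by (simp add: Q'_def linear_diff)
    then have "(dist (f x) (Q' i))\<^sup>2 = (f (x - Q i) - w i) \<bullet> (f (x - Q i) - w i)"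
      by (simp add: dist_norm power2_norm_eq_inner)
    also have "\<dots> = (norm (f (x - Q i)))\<^sup>2 + (norm (w i))\<^sup>2"
      using fw[of "x - Q i" i]
      by (simp add: power2_norm_eq_inner inner_diff_left inner_diff_right inner_commute)
    also have "\<dots> = (dist x (Q i))\<^sup>2 + 1" using f(3) nw by (simp add: dist_norm)
    finally show "(dist (f x) (Q' i))\<^sup>2 = (dist x (Q i))\<^sup>2 + 1" .
  qed
  have K2: "\<And>x i j. psi Q' i j (f x) = psi Q i j x" by (simp add: psi_def K1)
  have hyp: "\<And>e. gain_hyperplane ends phi Q' e \<inter> t = f ` gain_hyperplane ends phi Q e"
  proof (intro set_eqI iffI)
    fix e y assume y: "y \<in> gain_hyperplane ends phi Q' e \<inter> t"
    then obtain x where x: "y = f x" using f(2) t_def by blast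
    have "psi Q' (fst (ends e)) (snd (ends e)) (f x) = phi e" using y x unfolding gain_hyperplane_def by blast
    then have "psi Q (fst (ends e)) (snd (ends e)) x = phi e" using K2 by simp
    then show "y \<in> f ` gain_hyperplane ends phi Q e" using x unfolding gain_hyperplane_def by blast
  next
    fix e y assume "y \<in> f ` gain_hyperplane ends phi Q e"
    then obtain x where x: "y = f x" "psi Q (fst (ends e)) (snd (ends e)) x = phi e"
      unfolding gain_hyperplane_def by blast
    then have "psi Q' (fst (ends e)) (snd (ends e)) (f x) = phi e" using K2 by simp
    moreover have "f x \<in> t" using fspan t_def by simp
    ultimately show "y \<in> gain_hyperplane ends phi Q' e \<inter> t" using x unfolding gain_hyperplane_def by blast
  qed
  have ne: "\<And>e. e \<in> E \<Longrightarrow> gain_hyperplane ends phi Q' e \<inter> t \<noteq> {}"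
  proof -
    fix e assume e: "e \<in> E"
    obtain x where "psi Q (fst (ends e)) (snd (ends e)) x = phi e"
      using psi_hit[OF Qne[OF e]] unfolding psi_def by blast
    then have "f x \<in> f ` gain_hyperplane ends phi Q e" unfolding gain_hyperplane_def by blast
    then show "gain_hyperplane ends phi Q' e \<inter> t \<noteq> {}"
      unfolding hyp by blast
  qed
  have nsub: "\<And>e. e \<in> E \<Longrightarrow> \<not> t \<subseteq> gain_hyperplane ends phi Q' e"
  proof
    fix e assume e: "e \<in> E" and sub: "t \<subseteq> gain_hyperplane ends phi Q' e"
    obtain x where x: "psi Q (fst (ends e)) (snd (ends e)) x \<noteq> phi e"
      using psi_miss[OF Qne[OF e]] unfolding psi_def by blast
    have "f x \<in> t" using fspan t_def by simp
    then have "psi Q' (fst (ends e)) (snd (ends e)) (f x) = phi e"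
      using sub unfolding gain_hyperplane_def by blast
    then show False using x K2 by simp
  qed
  have arr: "(\<lambda>h. f ` h) ` gain_arrangement E ends phi Q
             = restrict_arr (gain_arrangement E ends phi Q') t"
    unfolding gain_arrangement_def restrict_arr_def
  proof (intro set_eqI iffI)
    fix y assume "y \<in> (`) f ` gain_hyperplane ends phi Q ` E"
    then obtain e where e: "e \<in> E" "y = f ` gain_hyperplane ends phi Q e" by blast
    then show "y \<in> {h \<inter> t |h. h \<in> gain_hyperplane ends phi Q' ` E \<and> \<not> t \<subseteq> h \<and> h \<inter> t \<noteq> {}}"
    proof -
      have "y = gain_hyperplane ends phi Q' e \<inter> t" using hyp[of e] e by simp
      moreover have "gain_hyperplane ends phi Q' e \<in> gain_hyperplane ends phi Q' ` E" using e by simp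
      ultimately show ?thesis using ne[OF e(1)] nsub[OF e(1)] by blast
    qed
  next
    fix y assume "y \<in> {h \<inter> t |h. h \<in> gain_hyperplane ends phi Q' ` E \<and> \<not> t \<subseteq> h \<and> h \<inter> t \<noteq> {}}"
    then obtain e where e: "e \<in> E" "y = gain_hyperplane ends phi Q' e \<inter> t" by blast
    then have "y = f ` gain_hyperplane ends phi Q e" using hyp[of e] by simp
    then show "y \<in> (`) f ` gain_hyperplane ends phi Q ` E" using e(1) by blast
  qed
  have isom: "\<forall>x y. dist (f x) (f y) = dist x y"
    using f(1,3) by (simp add: dist_norm linear_diff[symmetric])
  have afft: "affine t" "aff_dim t = int DIM('a)"
    using subspace_imp_affine[OF subspace_span] aff_dim_subspace[OF subspace_span] dimS0 t_def
    by auto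
  have \<sigma>B: "\<And>i. i \<in> R \<Longrightarrow> \<sigma> i \<in> Basis" using \<sigma>C CB by blast
  have u1B: "u1 \<in> Basis" using u1C CB by blast
  have fQC: "\<And>x k. k \<in> C \<Longrightarrow> f x \<bullet> k = 0" using orth fspan by blast
  have RI: "R \<subseteq> I" "B \<inter> R = {}" "I = B \<union> R" using R_def B(1) by auto
  have L: "\<forall>i\<in>I. lam i = 0" if s0: "sum lam I = 0" and v0: "(\<Sum>i\<in>I. lam i *\<^sub>R Q' i) = 0" for lam
  proof -
    have inS: "(\<Sum>i\<in>I. lam i * (w i \<bullet> k)) = 0" if k: "k \<in> C" for k
    proof -
      have "0 = (\<Sum>i\<in>I. lam i *\<^sub>R Q' i) \<bullet> k" using v0 by simp
      also have "\<dots> = (\<Sum>i\<in>I. lam i * (Q' i \<bullet> k))" by (simp add: inner_sum_left)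
      also have "\<dots> = (\<Sum>i\<in>I. lam i * (w i \<bullet> k))"
        using fQC[OF k] by (simp add: Q'_def inner_add_left)
      finally show ?thesis by simp
    qed
    have hR: "lam i = 0" if i: "i \<in> R" "i \<noteq> i0" for i
    proof -
      have ww: "w j \<bullet> \<sigma> i = (if j = i then 1 else 0)" if j: "j \<in> I" for j
      proof (cases "j \<in> R")
        case True
        then show ?thesis using \<sigma>B[OF True] \<sigma>B[OF i(1)] \<sigma>inj[OF True i(1)]
          by (auto simp: w_def inner_Basis)
      next
        case False
        have "u1 \<noteq> \<sigma> i" using \<sigma>inj[OF i0 i(1)] i(2) u1_def by auto
        then show ?thesis using False i(1) \<sigma>B[OF i(1)] u1B
          by (auto simp: w_def inner_Basis)
      qed
      have "0 = (\<Sum>j\<in>I. lam j * (w j \<bullet> \<sigma> i))" using inS[OF \<sigma>C[OF i(1)]] by simp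
      also have "\<dots> = (\<Sum>j\<in>I. (if j = i then lam j else 0))"
        by (rule sum.cong) (auto simp: ww)
      also have "\<dots> = lam i" using i(1) RI(1) finI by (simp add: sum.delta subsetD)
      finally show ?thesis by simp
    qed
    have wu: "w j \<bullet> u1 = (if j = i0 then 1 else 0) - (if j \<in> B then 1 else 0)" if j: "j \<in> I" for j
    proof (cases "j \<in> R")
      case True
      then show ?thesis using \<sigma>B[OF True] \<sigma>B[OF i0] \<sigma>inj[OF True i0] R_def
        by (auto simp: w_def inner_Basis u1_def)
    next
      case False
      then show ?thesis using j i0 u1B R_def by (auto simp: w_def inner_Basis)
    qed
    have "0 = (\<Sum>j\<in>I. lam j * (w j \<bullet> u1))" using inS[OF u1C] by simp
    also have "\<dots> = (\<Sum>j\<in>I. (if j = i0 then lam j else 0) - (if j \<in> B then lam j else 0))"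
      by (rule sum.cong) (auto simp: wu)
    also have "\<dots> = (\<Sum>j\<in>I. (if j = i0 then lam j else 0)) - (\<Sum>j\<in>I. (if j \<in> B then lam j else 0))"
      by (rule sum_subtractf)
    also have "\<dots> = lam i0 - sum lam B"
      using i0 RI finI by (simp add: sum.delta' sum.inter_restrict[symmetric] Int_absorb1)
    finally have e1: "lam i0 = sum lam B" by simp
    have sR: "sum lam R = lam i0"
      using sum.remove[OF finR i0, of lam] hR by simp
    have "sum lam I = sum lam B + sum lam R" using RI finB finR sum.union_disjoint by metis
    then have lam0: "lam i0 = 0" and sB: "sum lam B = 0" using s0 sR e1 by linarith+
    have hR0: "\<And>i. i \<in> R \<Longrightarrow> lam i = 0" using hR lam0 by blast
    have sw: "(\<Sum>i\<in>I. lam i *\<^sub>R w i) = 0"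
    proof -
      have "(\<Sum>i\<in>I. lam i *\<^sub>R w i) = (\<Sum>i\<in>B. lam i *\<^sub>R w i) + (\<Sum>i\<in>R. lam i *\<^sub>R w i)"
        using RI finB finR sum.union_disjoint by metis
      also have "(\<Sum>i\<in>R. lam i *\<^sub>R w i) = 0" using hR0 by simp
      also have "(\<Sum>i\<in>B. lam i *\<^sub>R w i) = (\<Sum>i\<in>B. lam i *\<^sub>R (- u1))"
        by (rule sum.cong) (auto simp: w_def R_def)
      also have "\<dots> = sum lam B *\<^sub>R (- u1)" by (simp add: scaleR_sum_left sum_negf)
      finally show ?thesis using sB by simp
    qed
    have "(\<Sum>i\<in>I. lam i *\<^sub>R Q' i) = f (\<Sum>i\<in>I. lam i *\<^sub>R Q i) + (\<Sum>i\<in>I. lam i *\<^sub>R w i)"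
      using f(1) by (simp add: Q'_def scaleR_add_right sum.distrib linear_sum linear_scale)
    then have "f (\<Sum>i\<in>I. lam i *\<^sub>R Q i) = 0" using v0 sw by simp
    then have "(\<Sum>i\<in>I. lam i *\<^sub>R Q i) = 0" using f(3) by (metis norm_eq_zero)
    moreover have "(\<Sum>i\<in>I. lam i *\<^sub>R Q i) = (\<Sum>i\<in>B. lam i *\<^sub>R Q i) + (\<Sum>i\<in>R. lam i *\<^sub>R Q i)"
      using RI finB finR sum.union_disjoint by metis
    moreover have "(\<Sum>i\<in>R. lam i *\<^sub>R Q i) = 0" using hR0 by simp
    ultimately have vB: "(\<Sum>i\<in>B. lam i *\<^sub>R Q i) = 0" by simp
    have hB: "\<forall>i\<in>B. lam i = 0"
    proof (rule ccontr)
      assume "\<not> ?thesis"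
      then obtain i where i: "i \<in> B" "lam i \<noteq> 0" by blast
      define U where "U p = lam (inv_into B Q p)" for p
      have UQ: "\<And>j. j \<in> B \<Longrightarrow> U (Q j) = lam j" using B(2) by (simp add: U_def inv_into_f_f)
      have "sum U (Q ` B) = sum lam B"
        using sum.reindex[OF B(2), of U] UQ by simp
      moreover have "(\<Sum>v\<in>Q ` B. U v *\<^sub>R v) = (\<Sum>j\<in>B. lam j *\<^sub>R Q j)"
        using sum.reindex[OF B(2), of "\<lambda>v. U v *\<^sub>R v"] UQ by simp
      moreover have "Q i \<in> Q ` B" "U (Q i) \<noteq> 0" using i UQ by auto
      ultimately have "\<exists>U'. sum U' (Q ` B) = 0 \<and> (\<exists>v\<in>Q ` B. U' v \<noteq> 0) \<and> (\<Sum>v\<in>Q ` B. U' v *\<^sub>R v) = 0"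
        using sB vB by metis
      then have "affine_dependent (Q ` B)"
        using affine_dependent_explicit_finite[of "Q ` B"] finB by blast
      then show False using Bp(2) B(3) by simp
    qed
    show ?thesis using hB hR0 RI by blast
  qed
  have injQ': "inj_on Q' I"
  proof (rule inj_onI, rule ccontr)
    fix i j assume ij: "i \<in> I" "j \<in> I" "Q' i = Q' j" "i \<noteq> j"
    define lam where "lam k = (if k = i then 1 else 0) - (if k = j then 1 else (0::real))" for k
    have "sum lam I = 0" using ij finI by (simp add: lam_def sum_subtractf)
    moreover have "(\<Sum>k\<in>I. lam k *\<^sub>R Q' k) = 0"
    proof -
      have "(\<Sum>k\<in>I. lam k *\<^sub>R Q' k) = (\<Sum>k\<in>I. (if k = i then Q' i else 0) - (if k = j then Q' j else 0))"
        by (rule sum.cong) (auto simp: lam_def)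
      also have "\<dots> = (\<Sum>k\<in>I. (if k = i then Q' i else 0)) - (\<Sum>k\<in>I. (if k = j then Q' j else 0))"
        by (rule sum_subtractf)
      also have "\<dots> = 0" using ij finI by simp
      finally show ?thesis .
    qed
    ultimately have "lam i = 0" using L ij(1) by blast
    then show False using ij by (simp add: lam_def)
  qed
  have indQ': "\<not> affine_dependent (Q' ` I)"
  proof
    assume "affine_dependent (Q' ` I)"
    then obtain U where U: "sum U (Q' ` I) = 0" "\<exists>v\<in>Q' ` I. U v \<noteq> 0" "(\<Sum>v\<in>Q' ` I. U v *\<^sub>R v) = 0"
      using affine_dependent_explicit_finite[of "Q' ` I"] finI by auto
    have "sum (U \<circ> Q') I = 0" using U(1) sum.reindex[OF injQ', of U] by simp
    moreover have "(\<Sum>i\<in>I. (U \<circ> Q') i *\<^sub>R Q' i) = 0"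
      using U(3) sum.reindex[OF injQ', of "\<lambda>v. U v *\<^sub>R v"] by simp
    ultimately have "\<forall>i\<in>I. (U \<circ> Q') i = 0" using L by blast
    then show False using U(2) by auto
  qed
  show ?thesis
    apply (rule exI[of _ Q'], rule exI[of _ t], rule exI[of _ f])
    using injQ' indQ' afft isom f(2) t_def arr I_def by simp
qed
end
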